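(* Let $F,G$ be non-constant functions analytic in some complex neighborhood of $0$, such that neither the curve of $F$ nor the curve of $G$ bounces back at zero. If $F,G$ roughly agree to the right of zero, then $F,G$ share a curve around zero.
   Context: $\Sigma_0$ denotes the collection of open intervals in $\mathbb R$ containing $0$; for $\mathcal I\in\Sigma_0$ put $\mathcal I^+:=\mathcal I\cap[0,\infty)$, $\mathcal I^-:=\mathcal I\cap(-\infty,0]$. "There are arbitrarily short intervals with property P" means: for every $\varepsilon>0$ there are such intervals of length less than $\varepsilon$. The curve of $F$ bounces back at zero if there are arbitrarily short $\mathcal I\in\Sigma_0$ with $F(\mathcal I^+)=F(\mathcal I^-)$. $F,G$ share a curve around zero if there are arbitrarily short $\mathcal I,\mathcal J\in\Sigma_0$ with $F(\mathcal I)=G(\mathcal J)$. $F,G$ roughly agree to the right of zero if there are sequences $(u_k)_{k\ge1},(v_k)_{k\ge1}$ of positive real numbers with $u_k\to0^+$, $v_k\to0^+$ and $F(u_k)=G(v_k)$ for all $k\ge1$. *)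

theory Defs
  imports "HOL-Analysis.Analysis"
begin

text \<open>The curve of F: its restriction to the real line, F(t) for real t.\<close>

definition bounces_back_at_zero :: "(complex \<Rightarrow> complex) \<Rightarrow> bool" where
  "bounces_back_at_zero F \<longleftrightarrow>
     (\<forall>\<epsilon>>0. \<exists>a b::real. a < 0 \<and> 0 < b \<and> b - a < \<epsilon> \<and>
        (\<lambda>t. F (complex_of_real t)) ` {0..<b} = (\<lambda>t. F (complex_of_real t)) ` {a<..0})"

definition share_curve_around_zero :: "(complex \<Rightarrow> complex) \<Rightarrow> (complex \<Rightarrow> complex) \<Rightarrow> bool" where
  "share_curve_around_zero F G \<longleftrightarrow>
     (\<forall>\<epsilon>>0. \<exists>a b c d::real. a < 0 \<and> 0 < b \<and> b - a < \<epsilon> \<and> c < 0 \<and> 0 < d \<and> d - c < \<epsilon> \<and>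
        (\<lambda>t. F (complex_of_real t)) ` {a<..<b} = (\<lambda>t. G (complex_of_real t)) ` {c<..<d})"

definition roughly_agree_right :: "(complex \<Rightarrow> complex) \<Rightarrow> (complex \<Rightarrow> complex) \<Rightarrow> bool" where
  "roughly_agree_right F G \<longleftrightarrow>
     (\<exists>u v :: nat \<Rightarrow> real. (\<forall>k. 0 < u k \<and> 0 < v k) \<and> u \<longlonglongrightarrow> 0 \<and> v \<longlonglongrightarrow> 0 \<and>
        (\<forall>k. F (complex_of_real (u k)) = G (complex_of_real (v k))))"

end

theory Submission
  imports Defs "HOL-Complex_Analysis.Complex_Analysis"
begin


lemma img_incr:
  fixes r :: "real \<Rightarrow> real"
  assumes xy: "x \<le> y" and c: "continuous_on {x..y} r"
    and m: "\<And>a b. x \<le> a \<Longrightarrow> a < b \<Longrightarrow> b \<le> y \<Longrightarrow> r a < r b"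
  shows "r ` {x..y} = {r x..r y}" "r ` {x<..<y} = {r x<..<r y}"
    "r ` {x..<y} = {r x..<r y}" "r ` {x<..y} = {r x<..r y}"
proof -
  have mono: "\<And>a b. x \<le> a \<Longrightarrow> a \<le> b \<Longrightarrow> b \<le> y \<Longrightarrow> r a \<le> r b"
    using m by (metis order_le_less)
  have A: "r ` {x..y} = {r x..r y}"
  proof
    show "r ` {x..y} \<subseteq> {r x..r y}" using mono by auto
    show "{r x..r y} \<subseteq> r ` {x..y}"
    proof
      fix z assume "z \<in> {r x..r y}"
      then obtain t where "x \<le> t" "t \<le> y" "r t = z" using IVT'[of r x z y] xy c by auto
      thus "z \<in> r ` {x..y}" by auto
    qed
  qed
  have B: "\<exists>t. x \<le> t \<and> t \<le> y \<and> z = r t" if "z \<in> {r x..r y}" for z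
    using that A by (metis atLeastAtMost_iff imageE)
  show "r ` {x..y} = {r x..r y}" by (fact A)
  show "r ` {x<..<y} = {r x<..<r y}"
  proof
    show "r ` {x<..<y} \<subseteq> {r x<..<r y}" using m by auto
    show "{r x<..<r y} \<subseteq> r ` {x<..<y}"
    proof
      fix z assume z: "z \<in> {r x<..<r y}"
      then obtain t where t: "x \<le> t" "t \<le> y" "z = r t" using B[of z] by auto
      with z have "t \<noteq> x" "t \<noteq> y" by auto
      with t show "z \<in> r ` {x<..<y}" by auto
    qed
  qed
  show "r ` {x..<y} = {r x..<r y}"
  proof
    show "r ` {x..<y} \<subseteq> {r x..<r y}" using m mono by auto
    show "{r x..<r y} \<subseteq> r ` {x..<y}"
    proof
      fix z assume z: "z \<in> {r x..<r y}"
      then obtain t where t: "x \<le> t" "t \<le> y" "z = r t" using B[of z] by auto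
      with z have "t \<noteq> y" by auto
      with t show "z \<in> r ` {x..<y}" by auto
    qed
  qed
  show "r ` {x<..y} = {r x<..r y}"
  proof
    show "r ` {x<..y} \<subseteq> {r x<..r y}" using m mono by auto
    show "{r x<..r y} \<subseteq> r ` {x<..y}"
    proof
      fix z assume z: "z \<in> {r x<..r y}"
      then obtain t where t: "x \<le> t" "t \<le> y" "z = r t" using B[of z] by auto
      with z have "t \<noteq> x" by auto
      with t show "z \<in> r ` {x<..y}" by auto
    qed
  qed
qed

lemma img_decr:
  fixes r :: "real \<Rightarrow> real"
  assumes xy: "x \<le> y" and c: "continuous_on {x..y} r"
    and m: "\<And>a b. x \<le> a \<Longrightarrow> a < b \<Longrightarrow> b \<le> y \<Longrightarrow> r b < r a"
  shows "r ` {x<..y} = {r y..<r x}"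
proof -
  have mono: "\<And>a b. x \<le> a \<Longrightarrow> a \<le> b \<Longrightarrow> b \<le> y \<Longrightarrow> r b \<le> r a"
    using m by (metis order_le_less)
  show ?thesis
  proof
    show "r ` {x<..y} \<subseteq> {r y..<r x}" using m mono by auto
    show "{r y..<r x} \<subseteq> r ` {x<..y}"
    proof
      fix z assume z: "z \<in> {r y..<r x}"
      then obtain t where t: "x \<le> t" "t \<le> y" "r t = z" using IVT2'[of r y z x] xy c by auto
      with z have "t \<noteq> x" by auto
      with t show "z \<in> r ` {x<..y}" by auto
    qed
  qed
qed

lemma odd_pow_less: "odd (k::nat) \<Longrightarrow> (x::real) < y \<Longrightarrow> x^k < y^k"
  by (metis odd_pos odd_real_root_power_cancel real_root_less_iff)

lemma pow_img:
  assumes "odd (k::nat)" "(x::real) \<le> y"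
  shows "(\<lambda>s. s^k) ` {x<..<y} = {x^k<..<y^k}" "(\<lambda>s. s^k) ` {x..<y} = {x^k..<y^k}"
    "(\<lambda>s. s^k) ` {x<..y} = {x^k<..y^k}"
proof -
  have c: "continuous_on {x..y} (\<lambda>s::real. s^k)" by (intro continuous_intros)
  have m: "\<And>a b. x \<le> a \<Longrightarrow> a < b \<Longrightarrow> b \<le> y \<Longrightarrow> a^k < b^k"
    using odd_pow_less[OF assms(1)] by blast
  show "(\<lambda>s. s^k) ` {x<..<y} = {x^k<..<y^k}" "(\<lambda>s. s^k) ` {x..<y} = {x^k..<y^k}"
    "(\<lambda>s. s^k) ` {x<..y} = {x^k<..y^k}"
    using img_incr[of x y "\<lambda>s. s^k", OF assms(2) c m] by auto
qed

lemma small_pow: "0 \<le> (t::real) \<Longrightarrow> t \<le> 1 \<Longrightarrow> odd (k::nat) \<Longrightarrow> t^k \<le> t"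
  using power_decreasing[of 1 k t] by (simp add: odd_pos Suc_leI)

lemma final:
  fixes Fr Gr :: "real \<Rightarrow> complex" and r :: "real \<Rightarrow> real" and k :: nat and \<delta> :: real
  assumes k: "odd k" and \<delta>: "\<delta> > 0"
    and eq: "\<And>s. \<bar>s\<bar> < \<delta> \<Longrightarrow> Fr (s^k) = Gr (r s)"
    and r0: "r 0 = 0"
    and cont: "continuous_on {-\<delta><..<\<delta>} r"
    and incr: "\<And>x y. 0 \<le> x \<Longrightarrow> x < y \<Longrightarrow> y < \<delta> \<Longrightarrow> r x < r y"
    and left: "(\<forall>x y. -\<delta> < x \<longrightarrow> x < y \<longrightarrow> y \<le> 0 \<longrightarrow> r x < r y) \<or>
               (\<forall>x y. -\<delta> < x \<longrightarrow> x < y \<longrightarrow> y \<le> 0 \<longrightarrow> r y < r x)"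
    and nb: "\<not> (\<forall>\<epsilon>>0. \<exists>a b::real. a < 0 \<and> 0 < b \<and> b - a < \<epsilon> \<and> Fr ` {0..<b} = Fr ` {a<..0})"
  shows "\<forall>\<epsilon>>0. \<exists>a b c d::real. a < 0 \<and> 0 < b \<and> b - a < \<epsilon> \<and> c < 0 \<and> 0 < d \<and> d - c < \<epsilon> \<and>
           Fr ` {a<..<b} = Gr ` {c<..<d}"
proof -
  have comp: "Fr ` ((\<lambda>s. s^k) ` S) = Gr ` (r ` S)" if "S \<subseteq> {-\<delta><..<\<delta>}" for S
  proof -
    have "Fr ` ((\<lambda>s. s^k) ` S) = (\<lambda>s. Fr (s^k)) ` S" by (simp add: image_image)
    also have "\<dots> = (\<lambda>s. Gr (r s)) ` S"
    proof (intro image_cong refl)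
      fix s assume "s \<in> S" then have "\<bar>s\<bar> < \<delta>" using that by (force simp: abs_less_iff)
      then show "Fr (s^k) = Gr (r s)" by (rule eq)
    qed
    also have "\<dots> = Gr ` (r ` S)" by (simp add: image_image)
    finally show ?thesis .
  qed
  have k0: "0 ^ k = (0::real)" using k by (simp add: odd_pos)
  have negpow: "(- x) ^ k = - (x ^ k)" for x :: real using k by (simp add: power_minus_odd)
  have contsub: "continuous_on {a..b} r" if "-\<delta> < a" "b < \<delta>" for a b
  proof (rule continuous_on_subset[OF cont])
    show "{a..b} \<subseteq> {-\<delta><..<\<delta>}" using that by auto
  qed
  from left show ?thesis
  proof
    assume L: "\<forall>x y. -\<delta> < x \<longrightarrow> x < y \<longrightarrow> y \<le> 0 \<longrightarrow> r x < r y"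
    have inc: "r x < r y" if "-\<delta> < x" "x < y" "y < \<delta>" for x y
    proof (cases "y \<le> 0")
      case True then show ?thesis using L that by auto
    next
      case False
      show ?thesis
      proof (cases "0 \<le> x")
        case True then show ?thesis using incr that by auto
      next
        case F2: False
        then have "r x < r 0" using L that by auto
        moreover have "r 0 < r y" using incr[of 0 y] False that by auto
        ultimately show ?thesis by simp
      qed
    qed
    show ?thesis
    proof (intro allI impI)
      fix \<epsilon> :: real assume e: "\<epsilon> > 0"
      have "isCont r 0"
        using cont \<delta> by (simp add: continuous_on_eq_continuous_at)
      then obtain \<eta> where \<eta>: "\<eta> > 0" "\<And>t. dist t 0 < \<eta> \<Longrightarrow> dist (r t) (r 0) < \<epsilon>/2"
        using e unfolding continuous_at_eps_delta by (meson half_gt_zero)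
      define x where "x = min (\<delta>/2) (min (\<eta>/2) (min (1/2) (\<epsilon>/3)))"
      have x: "0 < x" "x < \<delta>" "x < \<eta>" "x \<le> 1" "2*x < \<epsilon>"
        using \<delta> \<eta> e unfolding x_def by auto
      have rx: "\<bar>r x\<bar> < \<epsilon>/2" "\<bar>r (-x)\<bar> < \<epsilon>/2" using \<eta>(2)[of x] \<eta>(2)[of "-x"] x r0
        by (auto simp: dist_real_def)
      have c1: "r (-x) < 0" using inc[of "-x" 0] x r0 by auto
      have c2: "0 < r x" using inc[of 0 x] x r0 by auto
      have pi: "(\<lambda>s. s^k) ` {-x<..<x} = {-(x^k)<..<x^k}"
        using pow_img(1)[OF k, of "-x" x] x negpow by auto
      have ri: "r ` {-x<..<x} = {r (-x)<..<r x}"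
        using img_incr(2)[of "-x" x r] x inc contsub[of "-x" x] by auto
      have "Fr ` {-(x^k)<..<x^k} = Gr ` {r (-x)<..<r x}"
      proof -
        have sub: "{-x<..<x} \<subseteq> {-\<delta><..<\<delta>}" using x by auto
        show ?thesis using comp[OF sub] pi ri by simp
      qed
      moreover have "x^k \<le> x" using small_pow[OF _ _ k, of x] x by auto
      moreover have "0 < x^k" using x by simp
      ultimately show "\<exists>a b c d::real. a < 0 \<and> 0 < b \<and> b - a < \<epsilon> \<and> c < 0 \<and> 0 < d \<and> d - c < \<epsilon> \<and>
           Fr ` {a<..<b} = Gr ` {c<..<d}"
        using x rx c1 c2
        by (intro exI[of _ "-(x^k)"] exI[of _ "x^k"] exI[of _ "r (-x)"] exI[of _ "r x"]) auto
    qed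
  next
    assume R: "\<forall>x y. -\<delta> < x \<longrightarrow> x < y \<longrightarrow> y \<le> 0 \<longrightarrow> r y < r x"
    have "\<forall>\<epsilon>>0. \<exists>a b::real. a < 0 \<and> 0 < b \<and> b - a < \<epsilon> \<and> Fr ` {0..<b} = Fr ` {a<..0}"
    proof (intro allI impI)
      fix \<epsilon> :: real assume e: "\<epsilon> > 0"
      define x0 where "x0 = min (\<delta>/2) (min (1/2) (\<epsilon>/3))"
      have x0: "0 < x0" "x0 < \<delta>" "x0 \<le> 1" "2*x0 < \<epsilon>"
        using \<delta> e unfolding x0_def by auto
      have p1: "r (-x0) > 0" using R[rule_format, of "-x0" 0] x0 r0 by auto
      have p2: "r x0 > 0" using incr[of 0 x0] x0 r0 by auto
      have rl: "r ` {x<..0} = {0..<r x}" if "-\<delta> < x" "x \<le> 0" for x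
        using img_decr[of x 0 r] that contsub[of x 0] R \<delta> r0 by auto
      have rr: "r ` {0..<y} = {0..<r y}" if "0 \<le> y" "y < \<delta>" for y
        using img_incr(3)[of 0 y r] that contsub[of 0 y] incr \<delta> r0 by auto
      have pl: "(\<lambda>s. s^k) ` {x<..0} = {x^k<..0}" if "x \<le> 0" for x :: real
        using pow_img(3)[OF k, of x 0] that k0 by auto
      have pr: "(\<lambda>s. s^k) ` {0..<y} = {0..<y^k}" if "0 \<le> y" for y :: real
        using pow_img(2)[OF k, of 0 y] that k0 by auto
      have bl: "Fr ` {x^k<..0} = Gr ` {0..<r x}" if "-\<delta> < x" "x \<le> 0" for x
      proof -
        have sub: "{x<..0} \<subseteq> {-\<delta><..<\<delta>}" using that \<delta> by auto
        show ?thesis using comp[OF sub] pl[OF that(2)] rl[OF that] by simp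
      qed
      have br: "Fr ` {0..<y^k} = Gr ` {0..<r y}" if "0 \<le> y" "y < \<delta>" for y
      proof -
        have sub: "{0..<y} \<subseteq> {-\<delta><..<\<delta>}" using that \<delta> by auto
        show ?thesis using comp[OF sub] pr[OF that(1)] rr[OF that] by simp
      qed
      show "\<exists>a b::real. a < 0 \<and> 0 < b \<and> b - a < \<epsilon> \<and> Fr ` {0..<b} = Fr ` {a<..0}"
      proof (cases "r (-x0) \<le> r x0")
        case True
        then obtain y where y: "0 \<le> y" "y \<le> x0" "r y = r (-x0)"
          using IVT'[of r 0 "r (-x0)" x0] contsub[of 0 x0] x0 p1 r0 \<delta> by auto
        have "y \<noteq> 0" using y p1 r0 by auto
        with y have ypos: "0 < y" by simp
        have "Fr ` {0..<y^k} = Fr ` {(-x0)^k<..0}"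
          using bl[of "-x0"] br[of y] y x0 by auto
        moreover have "y^k \<le> y" "x0^k \<le> x0" using small_pow[OF _ _ k] y x0 by auto
        moreover have "0 < y^k" "0 < x0^k" using ypos x0 by auto
        ultimately show ?thesis using x0 y negpow[of x0]
          by (intro exI[of _ "(-x0)^k"] exI[of _ "y^k"]) auto
      next
        case False
        then obtain x where xx: "-x0 \<le> x" "x \<le> 0" "r x = r x0"
          using IVT2'[of r 0 "r x0" "-x0"] contsub[of "-x0" 0] x0 p2 r0 \<delta> by auto
        have "x \<noteq> 0" using xx p2 r0 by auto
        with xx have xneg: "x < 0" by simp
        have "Fr ` {0..<x0^k} = Fr ` {x^k<..0}"
          using bl[of x] br[of x0] xx x0 by auto
        moreover have "(-x)^k \<le> -x" "x0^k \<le> x0" using small_pow[OF _ _ k] xx x0 by auto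
        moreover have "0 < (-x)^k" "0 < x0^k" using xneg x0 by auto
        ultimately show ?thesis using x0 xx negpow[of x]
          by (intro exI[of _ "x^k"] exI[of _ "x0^k"]) auto
      qed
    qed
    then show ?thesis using nb by blast
  qed
qed


lemma sign_const:
  fixes D :: "real \<Rightarrow> real"
  assumes c: "continuous_on {a<..<b} D" and nz: "\<And>t. a < t \<Longrightarrow> t < b \<Longrightarrow> D t \<noteq> 0"
  shows "(\<forall>t. a < t \<longrightarrow> t < b \<longrightarrow> 0 < D t) \<or> (\<forall>t. a < t \<longrightarrow> t < b \<longrightarrow> D t < 0)"
proof (rule ccontr)
  assume "\<not> ?thesis"
  then obtain x y where x: "a < x" "x < b" "D x \<le> 0" and y: "a < y" "y < b" "D y \<ge> 0"
    by (auto simp: not_less)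
  have cc: "continuous_on {x'..y'} D" if "a < x'" "y' < b" for x' y'
    by (rule continuous_on_subset[OF c]) (use that in auto)
  show False
  proof (cases "x \<le> y")
    case True
    then obtain t where "x \<le> t" "t \<le> y" "D t = 0" using IVT'[of D x 0 y] x y cc[of x y] by auto
    then show False using nz[of t] x y by auto
  next
    case False
    then obtain t where "y \<le> t" "t \<le> x" "D t = 0" using IVT2'[of D x 0 y] x y cc[of y x] by auto
    then show False using nz[of t] x y by auto
  qed
qed

lemma cnj_ball0: "cnj ` ball 0 r = ball 0 r"
proof
  show "cnj ` ball 0 r \<subseteq> ball 0 r" by (auto simp: complex_mod_cnj)
  show "ball 0 r \<subseteq> cnj ` ball 0 r"
  proof
    fix x assume "x \<in> ball (0::complex) r"
    then have "cnj x \<in> ball 0 r" by (auto simp: complex_mod_cnj)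
    then show "x \<in> cnj ` ball 0 r" by (metis complex_cnj_cnj image_eqI)
  qed
qed

lemma core:
  fixes F G A B :: "complex \<Rightarrow> complex" and c :: complex and n m k q :: nat and R :: real
    and u v :: "nat \<Rightarrow> real"
  assumes R: "0 < R"
    and Ahol: "A holomorphic_on ball 0 R" and Anz: "\<And>z. z \<in> ball 0 R \<Longrightarrow> A z \<noteq> 0"
    and Bhol: "B holomorphic_on ball 0 R" and Bnz: "\<And>z. z \<in> ball 0 R \<Longrightarrow> B z \<noteq> 0"
    and Feq: "\<And>z. z \<in> ball 0 R \<Longrightarrow> F z = c + z^n * A z"
    and Geq: "\<And>z. z \<in> ball 0 R \<Longrightarrow> G z = c + z^m * B z"
    and n: "0 < n" and m: "0 < m" and k: "odd k" and nkq: "n * k = m * q"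
    and upos: "\<And>j. 0 < u j" and vpos: "\<And>j. 0 < v j" and ul: "u \<longlonglongrightarrow> 0" and vl: "v \<longlonglongrightarrow> 0"
    and FG: "\<And>j. F (of_real (u j)) = G (of_real (v j))"
    and nb: "\<not> bounces_back_at_zero F"
  shows "share_curve_around_zero F G"
proof -
  have k0: "0 < k" using k by (simp add: odd_pos)
  have q: "0 < q" using n m k0 nkq by (metis mult_pos_pos nat_0_less_mult_iff)
  define \<rho> where "\<rho> = min 1 R"
  have \<rho>: "0 < \<rho>" "\<rho> \<le> 1" "\<rho> \<le> R" using R by (auto simp: \<rho>_def)
  have powin: "z^k \<in> ball 0 R" if "z \<in> ball 0 \<rho>" for z :: complex
  proof -
    have z: "norm z < 1" "norm z < R" using that by (auto simp: \<rho>_def)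
    have "norm (z^k) = norm z ^ k" by (simp add: norm_power)
    also have "\<dots> \<le> norm z" using small_pow[of "norm z" k] k z by auto
    finally show ?thesis using z by simp
  qed
  have hA: "(\<lambda>z. A (z^k)) holomorphic_on ball 0 \<rho>"
  proof -
    have "(A \<circ> (\<lambda>z. z^k)) holomorphic_on ball 0 \<rho>"
      by (rule holomorphic_on_compose_gen[OF _ Ahol]) (use powin in \<open>auto intro: holomorphic_intros\<close>)
    then show ?thesis by (simp add: o_def)
  qed
  have hAnz: "\<And>z. z \<in> ball 0 \<rho> \<Longrightarrow> A (z^k) \<noteq> 0" using Anz powin by blast
  obtain L where L: "L holomorphic_on ball 0 \<rho>" "\<And>z. z \<in> ball 0 \<rho> \<Longrightarrow> A (z^k) = exp (L z)"
    using contractible_imp_holomorphic_log[OF hA convex_imp_contractible[OF convex_ball] hAnz]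
    by blast
  obtain L2 where L2: "L2 holomorphic_on ball 0 R" "\<And>z. z \<in> ball 0 R \<Longrightarrow> B z = exp (L2 z)"
    using contractible_imp_holomorphic_log[OF Bhol convex_imp_contractible[OF convex_ball] Bnz]
    by blast
  define \<alpha> where "\<alpha> = (\<lambda>z. exp (L z / of_nat m))"
  define \<beta> where "\<beta> = (\<lambda>z. exp (L2 z / of_nat m))"
  have \<alpha>m: "\<alpha> z ^ m = A (z^k)" if "z \<in> ball 0 \<rho>" for z :: complex
  proof -
    have "\<alpha> z ^ m = exp (of_nat m * (L z / of_nat m))" unfolding \<alpha>_def by (rule exp_of_nat_mult[symmetric])
    also have "\<dots> = exp (L z)" using m by simp
    finally show ?thesis using L(2)[OF that] by simp
  qed
  have \<beta>m: "\<beta> z ^ m = B z" if "z \<in> ball 0 R" for z :: complex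
  proof -
    have "\<beta> z ^ m = exp (of_nat m * (L2 z / of_nat m))" unfolding \<beta>_def by (rule exp_of_nat_mult[symmetric])
    also have "\<dots> = exp (L2 z)" using m by simp
    finally show ?thesis using L2(2)[OF that] by simp
  qed
  have \<alpha>hol: "\<alpha> holomorphic_on ball 0 \<rho>" unfolding \<alpha>_def using m by (intro holomorphic_intros L(1)) auto
  have \<beta>hol: "\<beta> holomorphic_on ball 0 R" unfolding \<beta>_def using m by (intro holomorphic_intros L2(1)) auto
  have \<alpha>nz: "\<alpha> z \<noteq> 0" for z :: complex unfolding \<alpha>_def by simp
  define h where "h = (\<lambda>z. z * \<beta> z)"
  have hhol: "h holomorphic_on ball 0 R" unfolding h_def by (intro holomorphic_intros \<beta>hol)
  have "(\<beta> has_field_derivative deriv \<beta> 0) (at 0)"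
    using holomorphic_derivI[OF \<beta>hol open_ball, of 0 UNIV] R by simp
  from DERIV_mult'[OF DERIV_ident this]
  have "(h has_field_derivative (\<beta> 0)) (at 0)" by (simp add: h_def)
  then have hder: "deriv h 0 \<noteq> 0" by (simp add: DERIV_imp_deriv \<beta>_def)
  have z0: "0 \<in> ball (0::complex) R" using R by simp
  obtain \<rho>2 where \<rho>2: "\<rho>2 > 0" "ball (0::complex) \<rho>2 \<subseteq> ball 0 R" and inj: "inj_on h (ball 0 \<rho>2)"
    using has_complex_derivative_locally_injective[OF hhol z0 open_ball hder] by blast
  have hhol2: "h holomorphic_on ball 0 \<rho>2" using hhol \<rho>2(2) by (rule holomorphic_on_subset)
  obtain hinv where hinv: "hinv holomorphic_on h ` ball 0 \<rho>2" "\<And>z. z \<in> ball 0 \<rho>2 \<Longrightarrow> hinv (h z) = z"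
    using holomorphic_has_inverse[OF hhol2 open_ball inj] by blast
  define V where "V = h ` ball 0 \<rho>2"
  have Vopen: "open V" unfolding V_def using open_mapping_thm3[OF hhol2 open_ball inj] .
  have h0: "h 0 = 0" by (simp add: h_def)
  have V0: "0 \<in> V"
  proof -
    have "h 0 \<in> h ` ball 0 \<rho>2" by (rule imageI) (simp add: \<rho>2(1))
    then show ?thesis unfolding V_def using h0 by simp
  qed
  have hV: "hinv y \<in> ball 0 \<rho>2 \<and> h (hinv y) = y" if "y \<in> V" for y
    using that hinv(2) unfolding V_def by auto
  have Fform: "F (z^k) = c + (z^q * \<alpha> z)^m" if "z \<in> ball 0 \<rho>" for z :: complex
  proof -
    have "F (z^k) = c + (z^k)^n * A (z^k)" using Feq powin[OF that] by simp
    also have "(z^k)^n = (z^q)^m"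
    proof -
      have e: "k*n = q*m" using nkq by (simp add: mult.commute)
      have "(z^k)^n = z^(k*n)" by (simp add: power_mult)
      also have "\<dots> = z^(q*m)" using e by simp
      also have "\<dots> = (z^q)^m" by (simp add: power_mult)
      finally show ?thesis .
    qed
    finally show ?thesis using \<alpha>m[OF that] by (simp add: power_mult_distrib)
  qed
  have Gform: "G z = c + (h z)^m" if "z \<in> ball 0 R" for z :: complex
    using Geq[OF that] \<beta>m[OF that] by (simp add: h_def power_mult_distrib)
  define s where "s = (\<lambda>j. root k (u j))"
  have spos: "0 < s j" for j unfolding s_def using real_root_gt_zero[OF k0 upos] .
  have sabs[simp]: "\<bar>s j\<bar> = s j" for j using spos[of j] by simp
  have spow: "s j ^ k = u j" for j unfolding s_def using odd_real_root_pow[OF k] .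
  have sl: "s \<longlonglongrightarrow> 0" unfolding s_def using tendsto_real_root[OF ul, of k] by simp
  have "\<forall>\<^sub>F j in sequentially. s j < \<rho> \<and> v j < \<rho>2"
    using order_tendstoD(2)[OF sl \<rho>(1)] order_tendstoD(2)[OF vl \<rho>2(1)] by (rule eventually_conj)
  then obtain N0 where N0: "\<And>j. j \<ge> N0 \<Longrightarrow> s j < \<rho> \<and> v j < \<rho>2"
    unfolding eventually_sequentially by blast
  define P where "P = (\<lambda>j. (of_real (s j) :: complex)^q * \<alpha> (of_real (s j)))"
  have Pnz: "P j \<noteq> 0" for j unfolding P_def using spos[of j] \<alpha>nz by simp
  have sball: "(of_real (s j) :: complex) \<in> ball 0 \<rho>" if "j \<ge> N0" for j
    using N0[OF that] spos[of j] by simp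
  have vabs[simp]: "\<bar>v j\<bar> = v j" for j using vpos[of j] by simp
  have vball: "(of_real (v j) :: complex) \<in> ball 0 \<rho>2" if "j \<ge> N0" for j
    using N0[OF that] vpos[of j] by simp
  have key: "h (of_real (v j)) ^ m = P j ^ m" if "j \<ge> N0" for j
  proof -
    have "F (of_real (u j)) = F ((of_real (s j))^k)" by (simp add: spow[symmetric])
    also have "\<dots> = c + P j ^ m" unfolding P_def by (rule Fform[OF sball[OF that]])
    finally have 1: "F (of_real (u j)) = c + P j ^ m" .
    have "(of_real (v j) :: complex) \<in> ball 0 R" using vball[OF that] \<rho>2(2) by blast
    then have 2: "G (of_real (v j)) = c + h (of_real (v j)) ^ m" by (rule Gform)
    show ?thesis using 1 2 FG[of j] by simp
  qed
  define \<omega> where "\<omega> = (\<lambda>j. h (of_real (v j)) / P j)"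
  have \<omega>m: "\<omega> j ^ m = 1" if "j \<ge> N0" for j
    unfolding \<omega>_def using key[OF that] Pnz[of j] by (simp add: power_divide)
  have finR: "finite {z::complex. z^m = 1}" using m by (intro finite_roots_unity) simp
  obtain w where w: "w^m = 1" and Iinf: "infinite {j. N0 \<le> j \<and> \<omega> j = w}"
  proof -
    have "\<exists>w. w^m = 1 \<and> infinite {j. N0 \<le> j \<and> \<omega> j = w}"
    proof (rule ccontr)
      assume "\<not> ?thesis"
      then have fin: "\<And>w. w \<in> {z. z^m = 1} \<Longrightarrow> finite {j. N0 \<le> j \<and> \<omega> j = w}" by auto
      have "{j. N0 \<le> j} \<subseteq> (\<Union>w\<in>{z. z^m = 1}. {j. N0 \<le> j \<and> \<omega> j = w})"
        using \<omega>m by auto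
      moreover have "finite (\<Union>w\<in>{z. z^m = 1}. {j. N0 \<le> j \<and> \<omega> j = w})"
        using finR fin by blast
      ultimately have "finite {j. N0 \<le> j}" by (rule finite_subset)
      moreover have "infinite {j::nat. N0 \<le> j}"
        unfolding infinite_nat_iff_unbounded_le
      proof
        fix m show "\<exists>n\<ge>m. n \<in> {j. N0 \<le> j}" by (rule exI[of _ "max m N0"]) auto
      qed
      ultimately show False by simp
    qed
    then show ?thesis using that by blast
  qed
  have contin: "continuous_on (ball 0 \<rho>) (\<lambda>z. w * z^q * \<alpha> z)"
    by (intro holomorphic_on_imp_continuous_on holomorphic_intros \<alpha>hol)
  have "open (ball 0 \<rho> \<inter> (\<lambda>z. w * z^q * \<alpha> z) -` V)"
    by (rule continuous_open_preimage[OF contin open_ball Vopen])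
  moreover have "0 \<in> ball 0 \<rho> \<inter> (\<lambda>z. w * z^q * \<alpha> z) -` V" using \<rho> V0 q by (simp add: power_0_left)
  ultimately obtain \<rho>3 where \<rho>3: "\<rho>3 > 0" "ball 0 \<rho>3 \<subseteq> ball 0 \<rho> \<inter> (\<lambda>z. w * z^q * \<alpha> z) -` V"
    by (rule openE)
  have \<rho>3sub: "ball (0::complex) \<rho>3 \<subseteq> ball 0 \<rho>" using \<rho>3 by auto
  have \<rho>3V: "w * z^q * \<alpha> z \<in> V" if "z \<in> ball 0 \<rho>3" for z using \<rho>3 that by auto
  define \<phi> where "\<phi> = (\<lambda>z. hinv (w * z^q * \<alpha> z))"
  have \<phi>hol: "\<phi> holomorphic_on ball 0 \<rho>3"
  proof -
    have "(hinv \<circ> (\<lambda>z. w * z^q * \<alpha> z)) holomorphic_on ball 0 \<rho>3"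
    proof (rule holomorphic_on_compose_gen)
      show "(\<lambda>z. w * z ^ q * \<alpha> z) holomorphic_on ball 0 \<rho>3"
        by (intro holomorphic_intros holomorphic_on_subset[OF \<alpha>hol \<rho>3sub])
      show "hinv holomorphic_on V" using hinv(1) unfolding V_def .
      show "(\<lambda>z. w * z ^ q * \<alpha> z) ` ball 0 \<rho>3 \<subseteq> V" using \<rho>3V by auto
    qed
    then show ?thesis by (simp add: \<phi>_def o_def)
  qed
  have \<phi>prop: "\<phi> z \<in> ball 0 \<rho>2 \<and> h (\<phi> z) = w * z^q * \<alpha> z" if "z \<in> ball 0 \<rho>3" for z :: complex
    unfolding \<phi>_def using hV[OF \<rho>3V[OF that]] .
  have \<phi>0: "\<phi> 0 = 0" unfolding \<phi>_def using q hinv(2)[of 0] \<rho>2(1) h0 by (simp add: power_0_left)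
  have \<phi>s: "\<phi> (of_real (s j)) = of_real (v j)" if "N0 \<le> j" "\<omega> j = w" for j
  proof -
    have "w * (of_real (s j))^q * \<alpha> (of_real (s j)) = \<omega> j * P j"
      using that(2) by (simp add: P_def)
    also have "\<dots> = h (of_real (v j))" unfolding \<omega>_def using Pnz[of j] by simp
    finally show ?thesis unfolding \<phi>_def using hinv(2)[OF vball[OF that(1)]] by simp
  qed
  have freq: "\<exists>j\<ge>M. N0 \<le> j \<and> \<omega> j = w \<and> s j < e" if epos: "e > 0" for M e
  proof -
    obtain N3 where N3: "\<And>j. j \<ge> N3 \<Longrightarrow> s j < e"
      using order_tendstoD(2)[OF sl epos] unfolding eventually_sequentially by blast
    obtain j where "j \<ge> max M N3" "j \<in> {j. N0 \<le> j \<and> \<omega> j = w}"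
      using Iinf unfolding infinite_nat_iff_unbounded_le by blast
    then show ?thesis using N3[of j] by auto
  qed
  define U where "U = {(of_real (s j) :: complex) | j. N0 \<le> j \<and> \<omega> j = w \<and> s j < \<rho>3}"
  have cnjhol: "(cnj \<circ> \<phi> \<circ> cnj) holomorphic_on ball 0 \<rho>3"
    by (rule holomorphic_on_compose_cnj_cnj) (simp_all add: cnj_ball0 \<phi>hol)
  have Usub: "U \<subseteq> ball 0 \<rho>3" unfolding U_def using spos by auto
  have Ulim: "0 islimpt U"
    unfolding islimpt_approachable
  proof (intro allI impI)
    fix e :: real assume e: "e > 0"
    obtain j where j: "N0 \<le> j" "\<omega> j = w" "s j < min e \<rho>3" using freq[of "min e \<rho>3" 0] e \<rho>3(1) by auto
    then have "(of_real (s j) :: complex) \<in> U" unfolding U_def by auto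
    then show "\<exists>x'\<in>U. x' \<noteq> 0 \<and> dist x' 0 < e" using j spos[of j] by (intro bexI[of _ "of_real (s j)"]) auto
  qed
  have sym: "\<phi> z - (cnj \<circ> \<phi> \<circ> cnj) z = 0" if "z \<in> ball 0 \<rho>3" for z :: complex
  proof (rule analytic_continuation[OF _ open_ball convex_connected[OF convex_ball] Usub _ Ulim _ that])
    show "(\<lambda>z. \<phi> z - (cnj \<circ> \<phi> \<circ> cnj) z) holomorphic_on ball 0 \<rho>3"
      by (intro holomorphic_intros \<phi>hol cnjhol)
    show "0 \<in> ball (0::complex) \<rho>3" using \<rho>3 by simp
    fix z assume "z \<in> U"
    then obtain j where j: "z = of_real (s j)" "N0 \<le> j" "\<omega> j = w" unfolding U_def by auto
    show "\<phi> z - (cnj \<circ> \<phi> \<circ> cnj) z = 0" using \<phi>s[OF j(2,3)] j(1) by simp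
  qed
  have Im0: "Im (\<phi> (of_real t)) = 0" if "\<bar>t\<bar> < \<rho>3" for t
  proof -
    have "(of_real t :: complex) \<in> ball 0 \<rho>3" using that by simp
    from sym[OF this] have "\<phi> (of_real t) = cnj (\<phi> (of_real t))" by simp
    then have "Im (\<phi> (of_real t)) = Im (cnj (\<phi> (of_real t)))" by (rule arg_cong)
    then show ?thesis by simp
  qed
  have real\<phi>: "\<phi> (of_real t) = of_real (Re (\<phi> (of_real t)))" if "\<bar>t\<bar> < \<rho>3" for t
    using Im0[OF that] by (simp add: complex_eq_iff)
  define D where "D = deriv \<phi>"
  have Dhol: "D holomorphic_on ball 0 \<rho>3" unfolding D_def by (rule holomorphic_deriv[OF \<phi>hol open_ball])
  have \<phi>der: "(\<phi> has_field_derivative D z) (at z)" if "z \<in> ball 0 \<rho>3" for z :: complex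
    unfolding D_def using holomorphic_derivI[OF \<phi>hol open_ball that, of UNIV] by simp
  have "\<not> 0 islimpt {z \<in> ball 0 \<rho>3. D z = 0}"
  proof
    assume lim: "0 islimpt {z \<in> ball 0 \<rho>3. D z = 0}"
    have D0: "D z = 0" if "z \<in> ball 0 \<rho>3" for z :: complex
      by (rule analytic_continuation[OF Dhol open_ball convex_connected[OF convex_ball] _ _ lim _ that])
        (use \<rho>3(1) in auto)
    have "\<exists>C. \<forall>z\<in>ball 0 \<rho>3. \<phi> z = C"
    proof (rule has_field_derivative_zero_constant[OF convex_ball])
      fix x assume x: "x \<in> ball (0::complex) \<rho>3"
      have "(\<phi> has_field_derivative D x) (at x)" by (rule \<phi>der[OF x])
      then show "(\<phi> has_field_derivative 0) (at x within ball 0 \<rho>3)"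
        using D0[OF x] by (simp add: has_field_derivative_at_within)
    qed
    then obtain C where C: "\<And>z. z \<in> ball 0 \<rho>3 \<Longrightarrow> \<phi> z = C" by blast
    have "C = 0" using C[of 0] \<phi>0 \<rho>3(1) by simp
    obtain j where j: "N0 \<le> j" "\<omega> j = w" "s j < \<rho>3" using freq[of \<rho>3 0] \<rho>3(1) by auto
    have "\<phi> (of_real (s j)) = of_real (v j)" by (rule \<phi>s[OF j(1,2)])
    moreover have "\<phi> (of_real (s j)) = 0" using C[of "of_real (s j)"] \<open>C = 0\<close> j spos[of j] by simp
    ultimately show False using vpos[of j] by simp
  qed
  then obtain e where e0: "e > 0" and e: "\<forall>x'\<in>{z \<in> ball 0 \<rho>3. D z = 0}. \<not> (x' \<noteq> 0 \<and> dist x' 0 < e)"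
    unfolding islimpt_approachable by blast
  define \<delta> where "\<delta> = min e \<rho>3"
  have \<delta>: "0 < \<delta>" "\<delta> \<le> \<rho>3" "\<delta> \<le> e" using e0 \<rho>3 by (auto simp: \<delta>_def)
  have tball: "(of_real t :: complex) \<in> ball 0 \<rho>3" if "\<bar>t\<bar> < \<delta>" for t
    using that \<delta> by simp
  have Dnz: "D (of_real t) \<noteq> 0" if "t \<noteq> 0" "\<bar>t\<bar> < \<delta>" for t
  proof
    assume "D (of_real t) = 0"
    then have "(of_real t :: complex) \<in> {z \<in> ball 0 \<rho>3. D z = 0}" using tball[OF that(2)] by simp
    then have "\<not> ((of_real t :: complex) \<noteq> 0 \<and> dist (of_real t :: complex) 0 < e)" using e by blast
    moreover have "dist (of_real t :: complex) 0 < e" using that \<delta> by simp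
    ultimately show False using that by simp
  qed
  define r where "r = (\<lambda>t. Re (\<phi> (of_real t)))"
  define Dr where "Dr = (\<lambda>t. Re (D (of_real t)))"
  have vd: "((\<lambda>x. \<phi> (of_real x)) has_vector_derivative D (of_real t)) (at t)" if "\<bar>t\<bar> < \<delta>" for t
    by (rule has_vector_derivative_real_field[OF \<phi>der[OF tball[OF that]]])
  have rder: "(r has_real_derivative Dr t) (at t)" if "\<bar>t\<bar> < \<delta>" for t
    unfolding r_def Dr_def by (rule has_field_derivative_Re[OF vd[OF that]])
  have ImD: "Im (D (of_real t)) = 0" if "\<bar>t\<bar> < \<delta>" for t
  proof -
    have 1: "((\<lambda>x. Im (\<phi> (of_real x))) has_field_derivative Im (D (of_real t))) (at t)"
      by (rule has_field_derivative_Im[OF vd[OF that]])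
    have 2: "((\<lambda>x. Im (\<phi> (of_real x))) has_field_derivative 0) (at t)"
    proof (rule has_field_derivative_transform_within_open[of "\<lambda>x. 0" 0 t "{-\<delta><..<\<delta>}"])
      show "((\<lambda>x. 0::real) has_field_derivative 0) (at t)" by simp
      show "open {-\<delta><..<\<delta>}" by simp
      show "t \<in> {-\<delta><..<\<delta>}" using that by auto
      fix x assume "x \<in> {-\<delta><..<\<delta>}"
      then have "\<bar>x\<bar> < \<rho>3" using \<delta> by auto
      then show "0 = Im (\<phi> (of_real x))" using Im0 by simp
    qed
    show ?thesis using DERIV_unique[OF 1 2] .
  qed
  have Drnz: "Dr t \<noteq> 0" if "t \<noteq> 0" "\<bar>t\<bar> < \<delta>" for t
    using Dnz[OF that] ImD[OF that(2)] unfolding Dr_def by (simp add: complex_eq_iff)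
  have rcont: "continuous_on {-\<delta><..<\<delta>} r"
  proof (rule continuous_at_imp_continuous_on, rule ballI)
    fix x assume "x \<in> {-\<delta><..<\<delta>}"
    then have "\<bar>x\<bar> < \<delta>" by auto
    then show "isCont r x" by (rule DERIV_isCont[OF rder])
  qed
  have Dcont: "continuous_on {a<..<b} Dr" if "-\<delta> \<le> a" "b \<le> \<delta>" for a b
  proof -
    have "continuous_on (ball 0 \<rho>3) D" by (rule holomorphic_on_imp_continuous_on[OF Dhol])
    moreover have "continuous_on {a<..<b} (\<lambda>t::real. (of_real t::complex))" by (intro continuous_intros)
    moreover have "(\<lambda>t::real. (of_real t::complex)) ` {a<..<b} \<subseteq> ball 0 \<rho>3"
    proof
      fix z assume "z \<in> (\<lambda>t::real. (of_real t::complex)) ` {a<..<b}"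
      then obtain t where "t \<in> {a<..<b}" "z = of_real t" by auto
      moreover have "\<bar>t\<bar> < \<delta>" using calculation(1) that by auto
      ultimately show "z \<in> ball 0 \<rho>3" using tball by simp
    qed
    ultimately have "continuous_on {a<..<b} (\<lambda>t. D (of_real t))" by (rule continuous_on_compose2)
    then show ?thesis unfolding Dr_def by (intro continuous_intros)
  qed
  have r0: "r 0 = 0" unfolding r_def using \<phi>0 by simp
  have req: "F (of_real (s'^k)) = G (of_real (r s'))" if "\<bar>s'\<bar> < \<delta>" for s'
  proof -
    define z where "z = (of_real s' :: complex)"
    have zb: "z \<in> ball 0 \<rho>3" unfolding z_def by (rule tball[OF that])
    have zb2: "z \<in> ball 0 \<rho>" using zb \<rho>3sub by blast
    have pz: "\<phi> z \<in> ball 0 R" using \<phi>prop[OF zb] \<rho>2(2) by blast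
    have "F (of_real (s'^k)) = F (z^k)" by (simp add: z_def)
    also have "\<dots> = c + (z^q * \<alpha> z)^m" by (rule Fform[OF zb2])
    also have "\<dots> = c + (h (\<phi> z))^m" using \<phi>prop[OF zb] w by (simp add: power_mult_distrib)
    also have "\<dots> = G (\<phi> z)" using Gform[OF pz] by simp
    also have "\<phi> z = of_real (r s')" unfolding r_def z_def using real\<phi>[of s'] \<delta> that by simp
    finally show ?thesis .
  qed
  have sgnR: "(\<forall>t. 0 < t \<longrightarrow> t < \<delta> \<longrightarrow> 0 < Dr t) \<or> (\<forall>t. 0 < t \<longrightarrow> t < \<delta> \<longrightarrow> Dr t < 0)"
    by (rule sign_const[OF Dcont]) (use Drnz \<delta> in auto)
  have sgnL: "(\<forall>t. -\<delta> < t \<longrightarrow> t < 0 \<longrightarrow> 0 < Dr t) \<or> (\<forall>t. -\<delta> < t \<longrightarrow> t < 0 \<longrightarrow> Dr t < 0)"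
    by (rule sign_const[OF Dcont]) (use Drnz \<delta> in auto)
  have subI: "continuous_on {x..y} r" if "-\<delta> < x" "y < \<delta>" for x y
  proof (rule continuous_on_subset[OF rcont])
    show "{x..y} \<subseteq> {-\<delta><..<\<delta>}" using that by auto
  qed
  have incgen: "r x < r y" if xy: "-\<delta> < x" "x < y" "y < \<delta>" and pos: "\<And>t. x < t \<Longrightarrow> t < y \<Longrightarrow> 0 < Dr t" for x y
  proof (rule DERIV_pos_imp_increasing_open[OF xy(2)])
    fix t assume t: "x < t" "t < y"
    then have "\<bar>t\<bar> < \<delta>" using xy by auto
    then show "\<exists>d. (r has_real_derivative d) (at t) \<and> 0 < d" using rder pos[OF t] by blast
  next
    show "continuous_on {x..y} r" using subI xy by simp
  qed
  have decgen: "r y < r x" if xy: "-\<delta> < x" "x < y" "y < \<delta>" and neg: "\<And>t. x < t \<Longrightarrow> t < y \<Longrightarrow> Dr t < 0" for x y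
  proof -
    have "(\<lambda>t. - r t) x < (\<lambda>t. - r t) y"
    proof (rule DERIV_pos_imp_increasing_open[OF xy(2)])
      fix t assume t: "x < t" "t < y"
      then have "\<bar>t\<bar> < \<delta>" using xy by auto
      then have "((\<lambda>t. - r t) has_real_derivative - Dr t) (at t)" using rder DERIV_minus by blast
      then show "\<exists>d. ((\<lambda>t. - r t) has_real_derivative d) (at t) \<and> 0 < d" using neg[OF t] by force
    next
      show "continuous_on {x..y} (\<lambda>t. - r t)" using subI[OF xy(1,3)] by (intro continuous_intros)
    qed
    then show ?thesis by simp
  qed
  have incr: "\<And>x y. 0 \<le> x \<Longrightarrow> x < y \<Longrightarrow> y < \<delta> \<Longrightarrow> r x < r y"
  proof -
    have "\<forall>t. 0 < t \<longrightarrow> t < \<delta> \<longrightarrow> 0 < Dr t"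
    proof (rule ccontr)
      assume "\<not> ?thesis"
      with sgnR have neg: "\<forall>t. 0 < t \<longrightarrow> t < \<delta> \<longrightarrow> Dr t < 0" by blast
      obtain j where j: "N0 \<le> j" "\<omega> j = w" "s j < \<delta>" using freq[of \<delta> 0] \<delta>(1) by auto
      have "r (s j) < r 0" by (rule decgen) (use j spos[of j] \<delta> neg in auto)
      moreover have "r (s j) = v j" unfolding r_def using \<phi>s[OF j(1,2)] by simp
      ultimately show False using r0 vpos[of j] by simp
    qed
    then show "\<And>x y. 0 \<le> x \<Longrightarrow> x < y \<Longrightarrow> y < \<delta> \<Longrightarrow> r x < r y"
      using incgen \<delta> by auto
  qed
  have left: "(\<forall>x y. -\<delta> < x \<longrightarrow> x < y \<longrightarrow> y \<le> 0 \<longrightarrow> r x < r y) \<or>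
               (\<forall>x y. -\<delta> < x \<longrightarrow> x < y \<longrightarrow> y \<le> 0 \<longrightarrow> r y < r x)"
    using sgnL
  proof
    assume "\<forall>t. -\<delta> < t \<longrightarrow> t < 0 \<longrightarrow> 0 < Dr t"
    then show ?thesis using incgen \<delta> by (intro disjI1) auto
  next
    assume "\<forall>t. -\<delta> < t \<longrightarrow> t < 0 \<longrightarrow> Dr t < 0"
    then show ?thesis using decgen \<delta> by (intro disjI2) auto
  qed
  have nb': "\<not> (\<forall>\<epsilon>>0. \<exists>a b::real. a < 0 \<and> 0 < b \<and> b - a < \<epsilon> \<and>
      (\<lambda>t. F (of_real t)) ` {0..<b} = (\<lambda>t. F (of_real t)) ` {a<..0})"
    using nb unfolding bounces_back_at_zero_def .
  have req': "\<And>s. \<bar>s\<bar> < \<delta> \<Longrightarrow> (\<lambda>t. F (of_real t)) (s^k) = (\<lambda>t. G (of_real t)) (r s)"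
    using req by simp
  show ?thesis
    unfolding share_curve_around_zero_def
    using final[of k \<delta> "\<lambda>t. F (of_real t)" "\<lambda>t. G (of_real t)" r, OF k \<delta>(1) req' r0 rcont incr left nb'] .
qed

lemma share_sym:
  assumes "share_curve_around_zero F G"
  shows "share_curve_around_zero G F"
  unfolding share_curve_around_zero_def
proof (intro allI impI)
  fix \<epsilon> :: real assume pos: "\<epsilon> > 0"
  have "\<exists>a b c d::real. a < 0 \<and> 0 < b \<and> b - a < \<epsilon> \<and> c < 0 \<and> 0 < d \<and> d - c < \<epsilon> \<and>
        (\<lambda>t. F (complex_of_real t)) ` {a<..<b} = (\<lambda>t. G (complex_of_real t)) ` {c<..<d}"
    using assms pos unfolding share_curve_around_zero_def by simp
  then obtain a b c d :: real where h: "a < 0 \<and> 0 < b \<and> b - a < \<epsilon> \<and> c < 0 \<and> 0 < d \<and> d - c < \<epsilon> \<and>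
        (\<lambda>t. F (complex_of_real t)) ` {a<..<b} = (\<lambda>t. G (complex_of_real t)) ` {c<..<d}"
    by metis
  show "\<exists>a b c d::real. a < 0 \<and> 0 < b \<and> b - a < \<epsilon> \<and> c < 0 \<and> 0 < d \<and> d - c < \<epsilon> \<and>
        (\<lambda>t. G (complex_of_real t)) ` {a<..<b} = (\<lambda>t. F (complex_of_real t)) ` {c<..<d}"
    using h by (intro exI[of _ c] exI[of _ d] exI[of _ a] exI[of _ b]) simp
qed

lemma factor:
  fixes F :: "complex \<Rightarrow> complex"
  assumes r1: "r1 > 0" "F holomorphic_on ball 0 r1" "\<not> (\<exists>c. \<forall>z\<in>ball 0 r1. F z = c)"
  obtains A rA n where "0 < n" "0 < rA" "A holomorphic_on ball 0 rA"
    "\<And>w. w \<in> ball 0 rA \<Longrightarrow> F w = F 0 + w^n * A w" "\<And>w. w \<in> ball 0 rA \<Longrightarrow> A w \<noteq> 0"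
proof -
  have hol: "(\<lambda>z. F z - F 0) holomorphic_on ball 0 r1"
    by (rule holomorphic_on_diff[OF r1(2) holomorphic_on_const])
  have nc: "\<not> (\<lambda>z. F z - F 0) constant_on ball 0 r1"
  proof
    assume "(\<lambda>z. F z - F 0) constant_on ball 0 r1"
    then obtain y where y: "\<And>z. z \<in> ball 0 r1 \<Longrightarrow> F z - F 0 = y" unfolding constant_on_def by auto
    have "\<forall>z\<in>ball 0 r1. F z = y + F 0"
    proof
      fix z :: complex assume "z \<in> ball 0 r1"
      from y[OF this] show "F z = y + F 0" by (simp add: diff_eq_eq)
    qed
    then have "\<exists>c. \<forall>z\<in>ball 0 r1. F z = c" by (rule exI)
    with r1(3) show False by contradiction
  qed
  have z0: "(0::complex) \<in> ball 0 r1" using r1 by simp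
  have f0: "F 0 - F 0 = 0" by simp
  show ?thesis
  proof (rule holomorphic_factor_zero_nonconstant[OF hol open_ball connected_ball z0 f0 nc])
    fix g r n
    assume h: "0 < n" "0 < r" "ball 0 r \<subseteq> ball 0 r1" "g holomorphic_on ball 0 r"
      "\<And>w. w \<in> ball 0 r \<Longrightarrow> F w - F 0 = (w - 0)^n * g w" "\<And>w. w \<in> ball 0 r \<Longrightarrow> g w \<noteq> 0"
    have eqs: "F w = F 0 + w^n * g w" if "w \<in> ball 0 r" for w
      using h(5)[OF that] by (simp add: diff_eq_eq add.commute)
    show ?thesis
    proof (rule that[where A=g and rA=r and n=n])
      show "0 < n" by (rule h(1))
      show "0 < r" by (rule h(2))
      show "g holomorphic_on ball 0 r" by (rule h(4))
      show "\<And>w. w \<in> ball 0 r \<Longrightarrow> F w = F 0 + w^n * g w" by (rule eqs)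
      show "\<And>w. w \<in> ball 0 r \<Longrightarrow> g w \<noteq> 0" by (rule h(6))
    qed
  qed
qed

theorem lemma5:
  fixes F G :: "complex \<Rightarrow> complex"
  assumes "\<exists>r>0. F analytic_on ball 0 r \<and> \<not> (\<exists>c. \<forall>z\<in>ball 0 r. F z = c)"
    and "\<exists>r>0. G analytic_on ball 0 r \<and> \<not> (\<exists>c. \<forall>z\<in>ball 0 r. G z = c)"
    and "\<not> bounces_back_at_zero F"
    and "\<not> bounces_back_at_zero G"
    and "roughly_agree_right F G"
  shows "share_curve_around_zero F G"
proof -
  obtain r1 where r1: "r1 > 0" "F analytic_on ball 0 r1" "\<not> (\<exists>c. \<forall>z\<in>ball 0 r1. F z = c)"
    using assms(1) by metis
  obtain r2 where r2: "r2 > 0" "G analytic_on ball 0 r2" "\<not> (\<exists>c. \<forall>z\<in>ball 0 r2. G z = c)"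
    using assms(2) by metis
  have Fh: "F holomorphic_on ball 0 r1" using r1(2) by (simp add: analytic_on_open)
  have Gh: "G holomorphic_on ball 0 r2" using r2(2) by (simp add: analytic_on_open)
  obtain u v :: "nat \<Rightarrow> real" where uv: "\<forall>k. 0 < u k \<and> 0 < v k" "u \<longlonglongrightarrow> 0" "v \<longlonglongrightarrow> 0"
    "\<forall>k. F (of_real (u k)) = G (of_real (v k))"
    using assms(5) unfolding roughly_agree_right_def by metis
  have cF: "isCont F 0"
    using holomorphic_on_imp_continuous_on[OF Fh] r1(1) by (simp add: continuous_on_eq_continuous_at)
  have cG: "isCont G 0"
    using holomorphic_on_imp_continuous_on[OF Gh] r2(1) by (simp add: continuous_on_eq_continuous_at)
  have lu: "(\<lambda>j. (of_real (u j) :: complex)) \<longlonglongrightarrow> 0" using tendsto_of_real[OF uv(2)] by simp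
  have lv: "(\<lambda>j. (of_real (v j) :: complex)) \<longlonglongrightarrow> 0" using tendsto_of_real[OF uv(3)] by simp
  have l1: "(\<lambda>j. F (of_real (u j))) \<longlonglongrightarrow> F 0" using isCont_tendsto_compose[OF cF lu] .
  have l2: "(\<lambda>j. F (of_real (u j))) \<longlonglongrightarrow> G 0"
    using isCont_tendsto_compose[OF cG lv] uv(4) by simp
  have FG0: "F 0 = G 0" using LIMSEQ_unique[OF l1 l2] .
  obtain A rA n where A: "0 < n" "0 < rA" "A holomorphic_on ball 0 rA"
    "\<And>w. w \<in> ball 0 rA \<Longrightarrow> F w = F 0 + w^n * A w" "\<And>w. w \<in> ball 0 rA \<Longrightarrow> A w \<noteq> 0"
    using factor[OF r1(1) Fh r1(3)] by metis
  obtain B rB m where B: "0 < m" "0 < rB" "B holomorphic_on ball 0 rB"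
    "\<And>w. w \<in> ball 0 rB \<Longrightarrow> G w = G 0 + w^m * B w" "\<And>w. w \<in> ball 0 rB \<Longrightarrow> B w \<noteq> 0"
    using factor[OF r2(1) Gh r2(3)] by metis
  define R where "R = min rA rB"
  have R: "0 < R" "ball (0::complex) R \<subseteq> ball 0 rA" "ball (0::complex) R \<subseteq> ball 0 rB"
    using A(2) B(2) by (auto simp: R_def)
  have AR: "A holomorphic_on ball 0 R" using A(3) R(2) by (rule holomorphic_on_subset)
  have BR: "B holomorphic_on ball 0 R" using B(3) R(3) by (rule holomorphic_on_subset)
  have AnzR: "\<And>z. z \<in> ball 0 R \<Longrightarrow> A z \<noteq> 0" using A(5) R(2) by blast
  have BnzR: "\<And>z. z \<in> ball 0 R \<Longrightarrow> B z \<noteq> 0" using B(5) R(3) by blast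
  have FeqR: "\<And>z. z \<in> ball 0 R \<Longrightarrow> F z = F 0 + z^n * A z" using A(4) R(2) by blast
  have GeqR: "\<And>z. z \<in> ball 0 R \<Longrightarrow> G z = F 0 + z^m * B z" using B(4) R(3) FG0 by auto
  define d where "d = gcd n m"
  define n' where "n' = n div d"
  define m' where "m' = m div d"
  have nd: "n = n' * d" unfolding n'_def d_def by simp
  have md: "m = m' * d" unfolding m'_def d_def by simp
  have cop: "coprime n' m'" unfolding n'_def m'_def d_def using A(1) by (intro div_gcd_coprime) simp
  have n'0: "0 < n'" using A(1) nd by (metis gr0I mult_0)
  have m'0: "0 < m'" using B(1) md by (metis gr0I mult_0)
  have eq1: "n * m' = m * n'" unfolding nd md by (simp add: ac_simps)
  show ?thesis
  proof (cases "odd m'")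
    case True
    show ?thesis
      by (rule core[where u=u and v=v, OF R(1) AR AnzR BR BnzR FeqR GeqR A(1) B(1) True eq1])
        (use uv assms(3) in auto)
  next
    case False
    have "odd n'"
    proof
      assume "even n'"
      with False have "2 dvd n'" "2 dvd m'" by auto
      then have "(2::nat) = 1" using coprime_common_divisor_nat[OF cop] by blast
      then show False by simp
    qed
    have eq2: "m * n' = n * m'" using eq1 by simp
    have GeqR': "\<And>z. z \<in> ball 0 R \<Longrightarrow> G z = F 0 + z^m * B z" by (rule GeqR)
    have "share_curve_around_zero G F"
      by (rule core[where u=v and v=u, OF R(1) BR BnzR AR AnzR GeqR' FeqR B(1) A(1) \<open>odd n'\<close> eq2])
        (use uv assms(4) in auto)
    then show ?thesis by (rule share_sym)
  qed
qed
end
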